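(* The following single-statistic generating functions hold over $S_n(123,132)$: $$\sum_{n\ge0}\sum_{\pi\in S_n(123,132)}x^np^{\operatorname{asc}(\pi)}=\frac{1-x}{1-2x+x^2-px^2},\qquad \sum_{n\ge0}\sum_{\pi\in S_n(123,132)}x^nq^{\operatorname{des}(\pi)}=\frac{1+x-2qx+x^2-2qx^2+q^2x^2}{1-2qx-qx^2+q^2x^2},$$ $$\sum_{n\ge0}\sum_{\pi\in S_n(123,132)}x^ny^{\operatorname{MNA}(\pi)}=\frac{1-x}{1-2x+x^2-x^2y},\qquad \sum_{n\ge0}\sum_{\pi\in S_n(123,132)}x^nz^{\operatorname{MND}(\pi)}=\frac{1+x+x^2-2x^2z-x^3z}{1-3x^2z-2x^3z}.$$
   Context: For $n\ge 0$, $S_n$ denotes the set of permutations $\pi=\pi_1\pi_2\cdots\pi_n$ of $[n]=\{1,\dots,n\}$ ($S_0$ consists of the empty permutation, for which all statistics below are $0$). $S_n(123,132)$ is the set of $\pi\in S_n$ containing no subsequence order-isomorphic to $123$ or to $132$. $\operatorname{asc}(\pi)$ (resp. $\operatorname{des}(\pi)$) is the number of $i\in[n-1]$ with $\pi_i<\pi_{i+1}$ (resp. $\pi_i>\pi_{i+1}$). $\operatorname{MNA}(\pi)$ is the maximum size of a set $I\subseteq[n-1]$ such that $\pi_i<\pi_{i+1}$ for all $i\in I$ and $|i-j|\ge 2$ for distinct $i,j\in I$; $\operatorname{MND}(\pi)$ is defined analogously with $\pi_i>\pi_{i+1}$. *)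

theory Defs
  imports "HOL-Computational_Algebra.Formal_Power_Series"
begin

text \<open>A permutation of [n] is represented by its one-line notation, a list of length n.
  Positions are 0-indexed in the list, which does not affect any statistic.\<close>

definition perms :: "nat \<Rightarrow> nat list set" where
  "perms n = {xs. distinct xs \<and> set xs = {1..n}}"

definition contains123 :: "nat list \<Rightarrow> bool" where
  "contains123 xs \<longleftrightarrow> (\<exists>i j k. i < j \<and> j < k \<and> k < length xs \<and>
       xs ! i < xs ! j \<and> xs ! j < xs ! k)"

definition contains132 :: "nat list \<Rightarrow> bool" where
  "contains132 xs \<longleftrightarrow> (\<exists>i j k. i < j \<and> j < k \<and> k < length xs \<and>
       xs ! i < xs ! k \<and> xs ! k < xs ! j)"

definition av123_132 :: "nat \<Rightarrow> nat list set" where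
  "av123_132 n = {xs \<in> perms n. \<not> contains123 xs \<and> \<not> contains132 xs}"

definition asc_set :: "nat list \<Rightarrow> nat set" where
  "asc_set xs = {i. Suc i < length xs \<and> xs ! i < xs ! Suc i}"

definition des_set :: "nat list \<Rightarrow> nat set" where
  "des_set xs = {i. Suc i < length xs \<and> xs ! i > xs ! Suc i}"

definition asc :: "nat list \<Rightarrow> nat" where
  "asc xs = card (asc_set xs)"

definition des :: "nat list \<Rightarrow> nat" where
  "des xs = card (des_set xs)"

definition nonadj :: "nat set \<Rightarrow> bool" where
  "nonadj I \<longleftrightarrow> (\<forall>i\<in>I. \<forall>j\<in>I. i \<noteq> j \<longrightarrow> i + 2 \<le> j \<or> j + 2 \<le> i)"

definition MNA :: "nat list \<Rightarrow> nat" where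
  "MNA xs = Max {card I | I. I \<subseteq> asc_set xs \<and> nonadj I}"

definition MND :: "nat list \<Rightarrow> nat" where
  "MND xs = Max {card I | I. I \<subseteq> des_set xs \<and> nonadj I}"

text \<open>Generating function of a statistic over S_n(123,132), with the statistic variable
  specialised to a field element t.\<close>
definition gf :: "(nat list \<Rightarrow> nat) \<Rightarrow> 'a::field \<Rightarrow> 'a fps" where
  "gf st t = Abs_fps (\<lambda>n. \<Sum>\<pi>\<in>av123_132 n. t ^ st \<pi>)"

end

theory Submission
  imports Defs
begin


lemma contains123_Cons:
  "contains123 (a#xs) \<longleftrightarrow> contains123 xs \<or>
     (\<exists>j k. j < k \<and> k < length xs \<and> a < xs!j \<and> xs!j < xs!k)"
proof
  assume "contains123 (a#xs)"
  then obtain i j k where h: "i < j" "j < k" "k < length (a#xs)"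
    "(a#xs)!i < (a#xs)!j" "(a#xs)!j < (a#xs)!k" unfolding contains123_def by blast
  obtain j' k' where jk: "j = Suc j'" "k = Suc k'" using h by (cases j; cases k; auto)
  show "contains123 xs \<or> (\<exists>j k. j < k \<and> k < length xs \<and> a < xs!j \<and> xs!j < xs!k)"
  proof (cases i)
    case 0 then show ?thesis using h jk by auto
  next
    case (Suc i') then have "contains123 xs" unfolding contains123_def using h jk
      by (intro exI[of _ i'] exI[of _ j'] exI[of _ k']) auto
    then show ?thesis ..
  qed
next
  assume "contains123 xs \<or> (\<exists>j k. j < k \<and> k < length xs \<and> a < xs!j \<and> xs!j < xs!k)"
  then show "contains123 (a#xs)"
  proof
    assume "contains123 xs"
    then obtain i j k where h: "i < j" "j < k" "k < length xs"
      "xs!i < xs!j" "xs!j < xs!k" unfolding contains123_def by blast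
    then show ?thesis unfolding contains123_def
      by (intro exI[of _ "Suc i"] exI[of _ "Suc j"] exI[of _ "Suc k"]) auto
  next
    assume "\<exists>j k. j < k \<and> k < length xs \<and> a < xs!j \<and> xs!j < xs!k"
    then obtain j k where h: "j < k" "k < length xs" "a < xs!j" "xs!j < xs!k" by blast
    then show ?thesis unfolding contains123_def
      by (intro exI[of _ 0] exI[of _ "Suc j"] exI[of _ "Suc k"]) auto
  qed
qed

lemma contains132_Cons:
  "contains132 (a#xs) \<longleftrightarrow> contains132 xs \<or>
     (\<exists>j k. j < k \<and> k < length xs \<and> a < xs!k \<and> xs!k < xs!j)"
proof
  assume "contains132 (a#xs)"
  then obtain i j k where h: "i < j" "j < k" "k < length (a#xs)"
    "(a#xs)!i < (a#xs)!k" "(a#xs)!k < (a#xs)!j" unfolding contains132_def by blast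
  obtain j' k' where jk: "j = Suc j'" "k = Suc k'" using h by (cases j; cases k; auto)
  show "contains132 xs \<or> (\<exists>j k. j < k \<and> k < length xs \<and> a < xs!k \<and> xs!k < xs!j)"
  proof (cases i)
    case 0 then show ?thesis using h jk by auto
  next
    case (Suc i') then have "contains132 xs" unfolding contains132_def using h jk
      by (intro exI[of _ i'] exI[of _ j'] exI[of _ k']) auto
    then show ?thesis ..
  qed
next
  assume "contains132 xs \<or> (\<exists>j k. j < k \<and> k < length xs \<and> a < xs!k \<and> xs!k < xs!j)"
  then show "contains132 (a#xs)"
  proof
    assume "contains132 xs"
    then obtain i j k where h: "i < j" "j < k" "k < length xs"
      "xs!i < xs!k" "xs!k < xs!j" unfolding contains132_def by blast
    then show ?thesis unfolding contains132_def
      by (intro exI[of _ "Suc i"] exI[of _ "Suc j"] exI[of _ "Suc k"]) auto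
  next
    assume "\<exists>j k. j < k \<and> k < length xs \<and> a < xs!k \<and> xs!k < xs!j"
    then obtain j k where h: "j < k" "k < length xs" "a < xs!k" "xs!k < xs!j" by blast
    then show ?thesis unfolding contains132_def
      by (intro exI[of _ 0] exI[of _ "Suc j"] exI[of _ "Suc k"]) auto
  qed
qed

definition two_above :: "nat \<Rightarrow> nat list \<Rightarrow> bool" where
  "two_above a xs \<longleftrightarrow> (\<exists>j k. j < k \<and> k < length xs \<and> a < xs!j \<and> a < xs!k)"

lemma avoid_Cons:
  assumes "distinct xs"
  shows "(\<not> contains123 (a#xs) \<and> \<not> contains132 (a#xs)) \<longleftrightarrow>
         (\<not> contains123 xs \<and> \<not> contains132 xs \<and> \<not> two_above a xs)"
proof -
  have "(\<exists>j k. j < k \<and> k < length xs \<and> a < xs!j \<and> xs!j < xs!k) \<or>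
        (\<exists>j k. j < k \<and> k < length xs \<and> a < xs!k \<and> xs!k < xs!j) \<longleftrightarrow> two_above a xs"
  proof
    assume "two_above a xs"
    then obtain j k where h: "j < k" "k < length xs" "a < xs!j" "a < xs!k"
      unfolding two_above_def by blast
    have "xs!j \<noteq> xs!k" using nth_eq_iff_index_eq[OF assms, of j k] h by simp
    then show "(\<exists>j k. j < k \<and> k < length xs \<and> a < xs!j \<and> xs!j < xs!k) \<or>
        (\<exists>j k. j < k \<and> k < length xs \<and> a < xs!k \<and> xs!k < xs!j)"
    proof (cases "xs!j < xs!k")
      case True then show ?thesis using h by blast
    next
      case False then have "xs!k < xs!j" using \<open>xs!j \<noteq> xs!k\<close> by simp
      then show ?thesis using h by blast
    qed
  next
    assume "(\<exists>j k. j < k \<and> k < length xs \<and> a < xs!j \<and> xs!j < xs!k) \<or>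
        (\<exists>j k. j < k \<and> k < length xs \<and> a < xs!k \<and> xs!k < xs!j)"
    then show "two_above a xs" unfolding two_above_def by (meson less_trans)
  qed
  then show ?thesis unfolding contains123_Cons contains132_Cons by blast
qed

lemma two_above_iff:
  assumes "distinct xs"
  shows "two_above a xs \<longleftrightarrow> 2 \<le> card {v \<in> set xs. a < v}"
proof
  assume "two_above a xs"
  then obtain j k where h: "j < k" "k < length xs" "a < xs!j" "a < xs!k"
    unfolding two_above_def by blast
  have c1: "xs!j \<noteq> xs!k" using nth_eq_iff_index_eq[OF assms, of j k] h by simp
  have c2: "{xs!j, xs!k} \<subseteq> {v \<in> set xs. a < v}" using h by auto
  show "2 \<le> card {v \<in> set xs. a < v}"
  proof -
    have "card {xs!j, xs!k} = 2" using c1 by simp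
    then show ?thesis using card_mono[OF _ c2] by simp
  qed
next
  assume "2 \<le> card {v \<in> set xs. a < v}"
  then have "\<not> card {v \<in> set xs. a < v} \<le> Suc 0" by simp
  then obtain u v where uv: "u \<in> {v \<in> set xs. a < v}" "v \<in> {v \<in> set xs. a < v}" "u \<noteq> v"
    using card_le_Suc0_iff_eq[of "{v \<in> set xs. a < v}"] by auto
  then obtain i j where ij: "i < length xs" "j < length xs" "xs!i = u" "xs!j = v"
    by (auto simp: in_set_conv_nth)
  then have "i \<noteq> j" using uv by auto
  then show "two_above a xs"
  proof (cases "i < j")
    case True then show ?thesis unfolding two_above_def using ij uv by auto
  next
    case False then have "j < i" using \<open>i \<noteq> j\<close> by simp
    then show ?thesis unfolding two_above_def using ij uv by auto
  qed
qed



lemma perms_length: "xs \<in> perms n \<Longrightarrow> length xs = n"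
  unfolding perms_def using distinct_card by fastforce

lemma finite_av: "finite (av123_132 n)"
proof -
  have "av123_132 n \<subseteq> {xs. set xs \<subseteq> {1..n} \<and> length xs = n}"
    unfolding av123_132_def using perms_length by (auto simp: perms_def)
  moreover have "finite {xs. set xs \<subseteq> {1..n} \<and> length xs = n}"
    by (rule finite_lists_length_eq) simp
  ultimately show ?thesis by (rule finite_subset)
qed

lemma short_avoid: "length xs < 3 \<Longrightarrow> \<not> contains123 xs \<and> \<not> contains132 xs"
  unfolding contains123_def contains132_def by auto

lemma av0: "av123_132 0 = {[]}"
  unfolding av123_132_def perms_def using short_avoid by auto

lemma av1: "av123_132 (Suc 0) = {[1]}"
proof -
  have "xs = [1]" if "distinct xs" "set xs = {1}" for xs :: "nat list"
  proof -
    have "length xs = 1" using distinct_card[OF that(1)] that(2) by simp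
    then obtain a where "xs = [a]" by (cases xs) auto
    then show ?thesis using that by simp
  qed
  then show ?thesis unfolding av123_132_def perms_def using short_avoid by auto
qed

lemma nth_strict:
  fixes f :: "nat \<Rightarrow> nat"
  assumes "strict_mono_on (set xs) f" "i < length xs" "j < length xs"
  shows "(f (xs!i) < f (xs!j)) = (xs!i < xs!j)"
  using strict_mono_on_less[OF assms(1)] assms(2,3) by simp

lemma contains123_map:
  fixes f :: "nat \<Rightarrow> nat"
  assumes "strict_mono_on (set xs) f"
  shows "contains123 (map f xs) = contains123 xs"
proof
  assume "contains123 (map f xs)"
  then obtain i j k where h: "i < j" "j < k" "k < length xs"
    "map f xs ! i < map f xs ! j" "map f xs ! j < map f xs ! k" unfolding contains123_def by auto
  have "(f (xs!i) < f (xs!j)) = (xs!i < xs!j)" "(f (xs!j) < f (xs!k)) = (xs!j < xs!k)"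
    using h by (intro nth_strict[OF assms]; simp)+
  then show "contains123 xs" unfolding contains123_def using h by auto
next
  assume "contains123 xs"
  then obtain i j k where h: "i < j" "j < k" "k < length xs"
    "xs ! i < xs ! j" "xs ! j < xs ! k" unfolding contains123_def by auto
  have "(f (xs!i) < f (xs!j)) = (xs!i < xs!j)" "(f (xs!j) < f (xs!k)) = (xs!j < xs!k)"
    using h by (intro nth_strict[OF assms]; simp)+
  then show "contains123 (map f xs)" unfolding contains123_def using h
    by (intro exI[of _ i] exI[of _ j] exI[of _ k]) auto
qed

lemma contains132_map:
  fixes f :: "nat \<Rightarrow> nat"
  assumes "strict_mono_on (set xs) f"
  shows "contains132 (map f xs) = contains132 xs"
proof
  assume "contains132 (map f xs)"
  then obtain i j k where h: "i < j" "j < k" "k < length xs"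
    "map f xs ! i < map f xs ! k" "map f xs ! k < map f xs ! j" unfolding contains132_def by auto
  have "(f (xs!i) < f (xs!k)) = (xs!i < xs!k)" "(f (xs!k) < f (xs!j)) = (xs!k < xs!j)"
    using h by (intro nth_strict[OF assms]; simp)+
  then show "contains132 xs" unfolding contains132_def using h by auto
next
  assume "contains132 xs"
  then obtain i j k where h: "i < j" "j < k" "k < length xs"
    "xs ! i < xs ! k" "xs ! k < xs ! j" unfolding contains132_def by auto
  have "(f (xs!i) < f (xs!k)) = (xs!i < xs!k)" "(f (xs!k) < f (xs!j)) = (xs!k < xs!j)"
    using h by (intro nth_strict[OF assms]; simp)+
  then show "contains132 (map f xs)" unfolding contains132_def using h
    by (intro exI[of _ i] exI[of _ j] exI[of _ k]) auto
qed

lemma asc_set_map: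
  fixes f :: "nat \<Rightarrow> nat"
  assumes "strict_mono_on (set xs) f"
  shows "asc_set (map f xs) = asc_set xs"
  unfolding asc_set_def using nth_strict[OF assms] by auto

lemma des_set_map:
  fixes f :: "nat \<Rightarrow> nat"
  assumes "strict_mono_on (set xs) f"
  shows "des_set (map f xs) = des_set xs"
  unfolding des_set_def using nth_strict[OF assms] by auto

definition relab :: "nat \<Rightarrow> nat \<Rightarrow> nat" where
  "relab m v = (if v = m then Suc m else v)"

definition unrelab :: "nat \<Rightarrow> nat \<Rightarrow> nat" where
  "unrelab m v = (if v = Suc m then m else v)"

lemma relab_mono: "strict_mono_on {..m} (relab m)"
  unfolding relab_def by (rule strict_mono_onI) auto

lemma unrelab_mono: "strict_mono_on (- {m}) (unrelab m)"
  unfolding unrelab_def by (rule strict_mono_onI) auto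

lemma av_perms: "\<pi> \<in> av123_132 n \<Longrightarrow> distinct \<pi> \<and> set \<pi> = {1..n}"
  unfolding av123_132_def perms_def by auto

lemma av_le: "\<pi> \<in> av123_132 n \<Longrightarrow> v \<in> set \<pi> \<Longrightarrow> v \<le> n"
  using av_perms by fastforce

lemma av_Suc:
  assumes m: "1 \<le> m"
  shows "av123_132 (Suc m) = Cons (Suc m) ` av123_132 m \<union> (\<lambda>\<tau>. m # map (relab m) \<tau>) ` av123_132 m"
proof (intro equalityI subsetI)
  fix \<pi> assume "\<pi> \<in> Cons (Suc m) ` av123_132 m \<union> (\<lambda>\<tau>. m # map (relab m) \<tau>) ` av123_132 m"
  then show "\<pi> \<in> av123_132 (Suc m)"
  proof
    assume "\<pi> \<in> Cons (Suc m) ` av123_132 m"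
    then obtain \<tau> where t: "\<tau> \<in> av123_132 m" "\<pi> = Suc m # \<tau>" by auto
    have d: "distinct \<tau>" "set \<tau> = {1..m}" using av_perms[OF t(1)] by auto
    have "\<not> two_above (Suc m) \<tau>" unfolding two_above_def using d(2) nth_mem
      by fastforce
    moreover have "\<not> contains123 \<tau> \<and> \<not> contains132 \<tau>" using t(1) unfolding av123_132_def by auto
    ultimately have "\<not> contains123 \<pi> \<and> \<not> contains132 \<pi>" using avoid_Cons[OF d(1)] t(2) by simp
    moreover have "\<pi> \<in> perms (Suc m)" unfolding perms_def using t(2) d by auto
    ultimately show ?thesis unfolding av123_132_def by simp
  next
    assume "\<pi> \<in> (\<lambda>\<tau>. m # map (relab m) \<tau>) ` av123_132 m"
    then obtain \<tau> where t: "\<tau> \<in> av123_132 m" "\<pi> = m # map (relab m) \<tau>" by auto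
    have d: "distinct \<tau>" "set \<tau> = {1..m}" using av_perms[OF t(1)] by auto
    have sm: "strict_mono_on (set \<tau>) (relab m)"
      using monotone_on_subset[OF relab_mono] d(2) by auto
    have dm: "distinct (map (relab m) \<tau>)"
      using d(1) strict_mono_on_imp_inj_on[OF sm] by (simp add: distinct_map)
    have sset: "set (map (relab m) \<tau>) = {1..<m} \<union> {Suc m}"
    proof (intro equalityI subsetI)
      fix v assume "v \<in> set (map (relab m) \<tau>)"
      then show "v \<in> {1..<m} \<union> {Suc m}" using d(2) by (auto simp: relab_def)
    next
      fix v assume v: "v \<in> {1..<m} \<union> {Suc m}"
      show "v \<in> set (map (relab m) \<tau>)"
      proof (cases "v = Suc m")
        case True then show ?thesis using d(2) m by (auto simp: relab_def intro!: rev_image_eqI[of m])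
      next
        case False then show ?thesis using d(2) v by (auto simp: relab_def intro!: rev_image_eqI[of v])
      qed
    qed
    have "\<not> two_above m (map (relab m) \<tau>)"
    proof
      assume "two_above m (map (relab m) \<tau>)"
      then obtain j k where h: "j < k" "k < length \<tau>" "m < map (relab m) \<tau> ! j" "m < map (relab m) \<tau> ! k"
        unfolding two_above_def by auto
      have "map (relab m) \<tau> ! j \<in> set (map (relab m) \<tau>)"
        by (rule nth_mem) (use h in simp)
      moreover have "map (relab m) \<tau> ! k \<in> set (map (relab m) \<tau>)"
        by (rule nth_mem) (use h in simp)
      ultimately have "map (relab m) \<tau> ! j = Suc m" "map (relab m) \<tau> ! k = Suc m" using h sset by auto
      then show False using dm h nth_eq_iff_index_eq[OF dm, of j k] by auto
    qed
    moreover have "\<not> contains123 (map (relab m) \<tau>) \<and> \<not> contains132 (map (relab m) \<tau>)"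
      using t(1) contains123_map[OF sm] contains132_map[OF sm] unfolding av123_132_def by auto
    ultimately have "\<not> contains123 \<pi> \<and> \<not> contains132 \<pi>" using avoid_Cons[OF dm] t(2) by simp
    moreover have "\<pi> \<in> perms (Suc m)" unfolding perms_def using t(2) dm sset m by auto
    ultimately show ?thesis unfolding av123_132_def by simp
  qed
next
  fix \<pi> assume p: "\<pi> \<in> av123_132 (Suc m)"
  have d: "distinct \<pi>" "set \<pi> = {1..Suc m}" using av_perms[OF p] by auto
  obtain a xs where pi: "\<pi> = a # xs" using d(2) by (cases \<pi>) auto
  have dx: "distinct xs" "a \<notin> set xs" using d(1) pi by auto
  have sx: "set xs = {1..Suc m} - {a}" using d(2) dx(2) pi by auto
  have a: "1 \<le> a" "a \<le> Suc m" using d(2) pi by auto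
  have av: "\<not> contains123 xs" "\<not> contains132 xs" "\<not> two_above a xs"
    using p pi avoid_Cons[OF dx(1), of a] unfolding av123_132_def by auto
  have "card {v \<in> set xs. a < v} \<le> 1" using av(3) two_above_iff[OF dx(1)] by simp
  moreover have "{v \<in> set xs. a < v} = {a<..Suc m}"
  proof (intro equalityI subsetI)
    fix v assume "v \<in> {v \<in> set xs. a < v}" then show "v \<in> {a<..Suc m}" unfolding sx by simp
  next
    fix v assume "v \<in> {a<..Suc m}" then show "v \<in> {v \<in> set xs. a < v}" unfolding sx using a by simp
  qed
  ultimately have "Suc m - a \<le> 1" by simp
  then have am: "a = m \<or> a = Suc m" using a by linarith
  have mx: "v \<in> set xs \<longleftrightarrow> 1 \<le> v \<and> v \<le> Suc m \<and> v \<noteq> a" for v using sx by simp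
  show "\<pi> \<in> Cons (Suc m) ` av123_132 m \<union> (\<lambda>\<tau>. m # map (relab m) \<tau>) ` av123_132 m"
  proof (cases "a = Suc m")
    case True
    have "set xs = {1..m}"
    proof (intro equalityI subsetI)
      fix v assume "v \<in> set xs" then show "v \<in> {1..m}" using True mx[of v] by simp
    next
      fix v assume "v \<in> {1..m}" then show "v \<in> set xs" using True mx[of v] by simp
    qed
    then have "xs \<in> av123_132 m" unfolding av123_132_def perms_def using dx(1) av by simp
    then show ?thesis using pi True by simp
  next
    case False
    then have am: "a = m" using am by simp
    define \<tau> where "\<tau> = map (unrelab m) xs"
    have "set xs \<subseteq> - {m}" using mx am by blast
    then have sm: "strict_mono_on (set xs) (unrelab m)"
      using monotone_on_subset[OF unrelab_mono] by blast
    have "relab m (unrelab m v) = v" if "v \<in> set xs" for v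
      using mx[of v] that am by (simp add: relab_def unrelab_def)
    then have xs_eq: "map (relab m) \<tau> = xs" unfolding \<tau>_def by (simp add: map_idI)
    have dt: "distinct \<tau>" unfolding \<tau>_def
      using dx(1) strict_mono_on_imp_inj_on[OF sm] by (simp add: distinct_map)
    have st: "set \<tau> = {1..m}"
    proof (intro equalityI subsetI)
      fix v assume "v \<in> set \<tau>"
      then obtain w where w: "w \<in> set xs" "v = unrelab m w" unfolding \<tau>_def by auto
      then show "v \<in> {1..m}" using mx[of w] am m by (simp add: unrelab_def split: if_splits)
    next
      fix v assume v: "v \<in> {1..m}"
      show "v \<in> set \<tau>"
      proof (cases "v = m")
        case True
        have "Suc m \<in> set xs" using mx[of "Suc m"] am by simp
        moreover have "unrelab m (Suc m) = v" using True by (simp add: unrelab_def)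
        ultimately show ?thesis unfolding \<tau>_def by (simp add: rev_image_eqI)
      next
        case False
        have "v \<in> set xs" using mx[of v] am v False by simp
        moreover have "unrelab m v = v" using v by (simp add: unrelab_def)
        ultimately show ?thesis unfolding \<tau>_def by (simp add: rev_image_eqI)
      qed
    qed
    have "\<not> contains123 \<tau>" "\<not> contains132 \<tau>" unfolding \<tau>_def
      using contains123_map[OF sm] contains132_map[OF sm] av by auto
    then have "\<tau> \<in> av123_132 m" unfolding av123_132_def perms_def using dt st by simp
    then show ?thesis using pi am xs_eq by auto
  qed
qed

lemma unrelab_relab: "(\<forall>v\<in>set \<tau>. v \<le> m) \<Longrightarrow> map (unrelab m) (map (relab m) \<tau>) = \<tau>"
  by (induct \<tau>) (auto simp: relab_def unrelab_def)

lemma sum_av_Suc: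
  assumes m: "1 \<le> m"
  shows "(\<Sum>\<pi>\<in>av123_132 (Suc m). h \<pi>) =
     (\<Sum>\<tau>\<in>av123_132 m. h (Suc m # \<tau>)) + (\<Sum>\<tau>\<in>av123_132 m. h (m # map (relab m) \<tau>))"
proof -
  have disj: "Cons (Suc m) ` av123_132 m \<inter> (\<lambda>\<tau>. m # map (relab m) \<tau>) ` av123_132 m = {}" by auto
  have inj2: "inj_on (\<lambda>\<tau>. m # map (relab m) \<tau>) (av123_132 m)"
  proof (rule inj_onI)
    fix x y assume xy: "x \<in> av123_132 m" "y \<in> av123_132 m" "m # map (relab m) x = m # map (relab m) y"
    then have "map (unrelab m) (map (relab m) x) = map (unrelab m) (map (relab m) y)" by simp
    moreover have "\<forall>v\<in>set x. v \<le> m" using av_le xy(1) by blast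
    moreover have "\<forall>v\<in>set y. v \<le> m" using av_le xy(2) by blast
    ultimately show "x = y" using unrelab_relab by simp
  qed
  have inj1: "inj_on (Cons (Suc m)) (av123_132 m)" by (rule inj_onI) simp
  have "(\<Sum>\<pi>\<in>av123_132 (Suc m). h \<pi>) =
     (\<Sum>\<pi>\<in>Cons (Suc m) ` av123_132 m. h \<pi>) + (\<Sum>\<pi>\<in>(\<lambda>\<tau>. m # map (relab m) \<tau>) ` av123_132 m. h \<pi>)"
    unfolding av_Suc[OF m] by (rule sum.union_disjoint[OF _ _ disj]) (rule finite_imageI, rule finite_av)+
  also have "(\<Sum>\<pi>\<in>Cons (Suc m) ` av123_132 m. h \<pi>) = (\<Sum>\<tau>\<in>av123_132 m. h (Suc m # \<tau>))"
    unfolding sum.reindex[OF inj1] comp_def ..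
  also have "(\<Sum>\<pi>\<in>(\<lambda>\<tau>. m # map (relab m) \<tau>) ` av123_132 m. h \<pi>) = (\<Sum>\<tau>\<in>av123_132 m. h (m # map (relab m) \<tau>))"
    unfolding sum.reindex[OF inj2] comp_def ..
  finally show ?thesis .
qed



lemma asc_set_finite: "finite (asc_set xs)"
  by (rule finite_subset[of _ "{..<length xs}"]) (auto simp: asc_set_def)

lemma des_set_finite: "finite (des_set xs)"
  by (rule finite_subset[of _ "{..<length xs}"]) (auto simp: des_set_def)

lemma asc_set_Cons2: "asc_set (a # b # xs) = (if a < b then {0} else {}) \<union> Suc ` asc_set (b # xs)"
proof (intro equalityI subsetI)
  fix i assume "i \<in> asc_set (a # b # xs)"
  then show "i \<in> (if a < b then {0} else {}) \<union> Suc ` asc_set (b # xs)"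
    by (cases i) (auto simp: asc_set_def)
next
  fix i assume "i \<in> (if a < b then {0} else {}) \<union> Suc ` asc_set (b # xs)"
  then show "i \<in> asc_set (a # b # xs)"
    by (cases "a < b") (auto simp: asc_set_def)
qed

lemma des_set_Cons2: "des_set (a # b # xs) = (if b < a then {0} else {}) \<union> Suc ` des_set (b # xs)"
proof (intro equalityI subsetI)
  fix i assume "i \<in> des_set (a # b # xs)"
  then show "i \<in> (if b < a then {0} else {}) \<union> Suc ` des_set (b # xs)"
    by (cases i) (auto simp: des_set_def)
next
  fix i assume "i \<in> (if b < a then {0} else {}) \<union> Suc ` des_set (b # xs)"
  then show "i \<in> des_set (a # b # xs)"
    by (cases "b < a") (auto simp: des_set_def)
qed

lemma asc_Cons2: "asc (a # b # xs) = (if a < b then 1 else 0) + asc (b # xs)"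
proof -
  have c: "card (Suc ` asc_set (b # xs)) = asc (b # xs)"
    unfolding asc_def by (rule card_image) simp
  show ?thesis unfolding asc_def asc_set_Cons2
    using c asc_set_finite[of "b#xs"] by (auto simp: asc_def)
qed

lemma des_Cons2: "des (a # b # xs) = (if b < a then 1 else 0) + des (b # xs)"
proof -
  have c: "card (Suc ` des_set (b # xs)) = des (b # xs)"
    unfolding des_def by (rule card_image) simp
  show ?thesis unfolding des_def des_set_Cons2
    using c des_set_finite[of "b#xs"] by (auto simp: des_def)
qed

lemma asc_map: "strict_mono_on (set xs) (f :: nat \<Rightarrow> nat) \<Longrightarrow> asc (map f xs) = asc xs"
  unfolding asc_def by (simp add: asc_set_map)

lemma des_map: "strict_mono_on (set xs) (f :: nat \<Rightarrow> nat) \<Longrightarrow> des (map f xs) = des xs"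
  unfolding des_def by (simp add: des_set_map)

lemma MND_map: "strict_mono_on (set xs) (f :: nat \<Rightarrow> nat) \<Longrightarrow> MND (map f xs) = MND xs"
  unfolding MND_def by (simp add: des_set_map)

definition mn :: "nat set \<Rightarrow> nat" where
  "mn S = Max {card I | I. I \<subseteq> S \<and> nonadj I}"

lemma mn_fin: "finite S \<Longrightarrow> finite {card I | I. I \<subseteq> S \<and> nonadj I}"
proof -
  assume "finite S"
  then have "finite (card ` Pow S)" by simp
  moreover have "{card I | I. I \<subseteq> S \<and> nonadj I} \<subseteq> card ` Pow S" by auto
  ultimately show ?thesis by (rule finite_subset[rotated])
qed

lemma nonadj_empty: "nonadj {}" by (simp add: nonadj_def)

lemma mn_ge: "finite S \<Longrightarrow> I \<subseteq> S \<Longrightarrow> nonadj I \<Longrightarrow> card I \<le> mn S"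
  unfolding mn_def by (rule Max_ge) (auto dest: mn_fin)

lemma mn_ex: "finite S \<Longrightarrow> \<exists>I. I \<subseteq> S \<and> nonadj I \<and> card I = mn S"
proof -
  assume f: "finite S"
  have "mn S \<in> {card I | I. I \<subseteq> S \<and> nonadj I}" unfolding mn_def
    by (rule Max_in[OF mn_fin[OF f]]) (use nonadj_empty in auto)
  then show ?thesis by auto
qed

lemma mn_empty: "mn {} = 0"
proof -
  have "{card I | I. I \<subseteq> ({}::nat set) \<and> nonadj I} = {0}" using nonadj_empty by auto
  then show ?thesis unfolding mn_def by simp
qed

lemma nonadj_subset: "nonadj I \<Longrightarrow> J \<subseteq> I \<Longrightarrow> nonadj J"
  unfolding nonadj_def by blast

lemma mn_shift1:
  assumes f: "finite S" and z: "0 \<notin> S"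
  shows "mn S = mn (Suc -` S)"
proof (rule antisym)
  have f2: "finite (Suc -` S)" using f by (simp add: finite_vimageI)
  obtain I where I: "I \<subseteq> S" "nonadj I" "card I = mn S" using mn_ex[OF f] by blast
  have "0 \<notin> I" using I z by auto
  then have IJ: "I = Suc ` (Suc -` I)" by (auto simp: image_iff) (metis not0_implies_Suc)
  have "card (Suc -` I) = card I" using IJ card_image[of Suc "Suc -` I"] by simp
  moreover have "nonadj (Suc -` I)" using I(2) unfolding nonadj_def by fastforce
  moreover have "Suc -` I \<subseteq> Suc -` S" using I(1) by auto
  ultimately show "mn S \<le> mn (Suc -` S)" using mn_ge[OF f2] I(3) by metis
next
  have f2: "finite (Suc -` S)" using f by (simp add: finite_vimageI)
  obtain J where J: "J \<subseteq> Suc -` S" "nonadj J" "card J = mn (Suc -` S)" using mn_ex[OF f2] by blast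
  have "card (Suc ` J) = card J" by (rule card_image) simp
  moreover have "nonadj (Suc ` J)" using J(2) unfolding nonadj_def by fastforce
  moreover have "Suc ` J \<subseteq> S" using J(1) by auto
  ultimately show "mn (Suc -` S) \<le> mn S" using mn_ge[OF f] J(3) by metis
qed

lemma mn_shift2:
  assumes f: "finite S" and z: "0 \<in> S"
  shows "mn S = Suc (mn ((\<lambda>i. Suc (Suc i)) -` S))"
proof (rule antisym)
  let ?g = "\<lambda>i. Suc (Suc i)"
  have injg: "inj ?g" by (rule injI) simp
  have f2: "finite (?g -` S)" using f injg by (simp add: finite_vimageI)
  obtain I where I: "I \<subseteq> S" "nonadj I" "card I = mn S" using mn_ex[OF f] by blast
  have fI: "finite I" using I(1) f finite_subset by blast
  have split: "I \<subseteq> (I \<inter> {0, 1}) \<union> ?g ` (?g -` I)"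
  proof
    fix x assume "x \<in> I" then show "x \<in> (I \<inter> {0, 1}) \<union> ?g ` (?g -` I)"
      by (cases x; cases "x - 1") (auto simp: image_iff)
  qed
  have c01: "card (I \<inter> {0, 1}) \<le> 1"
  proof (cases "0 \<in> I \<and> 1 \<in> I")
    case True
    then have "0 + 2 \<le> (1::nat) \<or> 1 + 2 \<le> (0::nat)" using I(2) unfolding nonadj_def by blast
    then show ?thesis by simp
  next
    case False
    then have "I \<inter> {0, 1} \<subseteq> {0} \<or> I \<inter> {0, 1} \<subseteq> {1}" by auto
    then show ?thesis using card_mono[of "{0::nat}"] card_mono[of "{1::nat}"] by fastforce
  qed
  have "card I \<le> card ((I \<inter> {0, 1}) \<union> ?g ` (?g -` I))"
    by (rule card_mono[OF _ split]) (use fI in auto)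
  also have "\<dots> \<le> card (I \<inter> {0, 1}) + card (?g ` (?g -` I))" by (rule card_Un_le)
  also have "card (?g ` (?g -` I)) = card (?g -` I)" by (rule card_image) (use injg in \<open>simp add: inj_on_def\<close>)
  finally have c: "card I \<le> Suc (card (?g -` I))" using c01 by simp
  have "nonadj (?g -` I)" using I(2) unfolding nonadj_def by fastforce
  moreover have "?g -` I \<subseteq> ?g -` S" using I(1) by auto
  ultimately have "card (?g -` I) \<le> mn (?g -` S)" using mn_ge[OF f2] by blast
  then show "mn S \<le> Suc (mn (?g -` S))" using c I(3) by simp
next
  let ?g = "\<lambda>i. Suc (Suc i)"
  have injg: "inj ?g" by (rule injI) simp
  have f2: "finite (?g -` S)" using f injg by (simp add: finite_vimageI)
  obtain J where J: "J \<subseteq> ?g -` S" "nonadj J" "card J = mn (?g -` S)" using mn_ex[OF f2] by blast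
  have fJ: "finite J" using J(1) f2 finite_subset by blast
  have "card (insert 0 (?g ` J)) = Suc (card (?g ` J))" using fJ by (subst card_insert_disjoint) auto
  also have "card (?g ` J) = card J" by (rule card_image) (use injg in \<open>simp add: inj_on_def\<close>)
  finally have c: "card (insert 0 (?g ` J)) = Suc (card J)" .
  have "nonadj (insert 0 (?g ` J))" using J(2) unfolding nonadj_def by fastforce
  moreover have "insert 0 (?g ` J) \<subseteq> S" using J(1) z by auto
  ultimately show "Suc (mn (?g -` S)) \<le> mn S" using mn_ge[OF f] c J(3) by metis
qed

lemma MND_Cons2: "MND (a # b # xs) = (if b < a then Suc (MND xs) else MND (b # xs))"
proof -
  have e: "MND ys = mn (des_set ys)" for ys unfolding MND_def mn_def ..
  have s1: "Suc -` des_set (a # ys) = des_set ys" for a ys by (auto simp: des_set_def)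
  have s2: "(\<lambda>i. Suc (Suc i)) -` des_set (a # b # xs) = des_set xs" by (auto simp: des_set_def)
  show ?thesis
  proof (cases "b < a")
    case True
    then have "0 \<in> des_set (a # b # xs)" by (simp add: des_set_def)
    then show ?thesis using True unfolding e using mn_shift2[OF des_set_finite] s2 by simp
  next
    case False
    then have "0 \<notin> des_set (a # b # xs)" by (simp add: des_set_def)
    then show ?thesis using False unfolding e using mn_shift1[OF des_set_finite] s1 by simp
  qed
qed

lemma MND_short: "length xs < 2 \<Longrightarrow> MND xs = 0"
proof -
  assume "length xs < 2"
  then have "des_set xs = {}" by (auto simp: des_set_def)
  then show ?thesis unfolding MND_def using mn_empty unfolding mn_def by simp
qed

lemma asc_short: "length xs < 2 \<Longrightarrow> asc xs = 0"
  by (auto simp: asc_def asc_set_def)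

lemma des_short: "length xs < 2 \<Longrightarrow> des xs = 0"
  by (auto simp: des_def des_set_def)

lemma MNA_eq_asc:
  assumes "\<pi> \<in> av123_132 n"
  shows "MNA \<pi> = asc \<pi>"
proof -
  have nc: "\<not> contains123 \<pi>" using assms unfolding av123_132_def by auto
  have na: "nonadj (asc_set \<pi>)" unfolding nonadj_def
  proof (intro ballI impI)
    fix i j assume ij: "i \<in> asc_set \<pi>" "j \<in> asc_set \<pi>" "i \<noteq> j"
    show "i + 2 \<le> j \<or> j + 2 \<le> i"
    proof (rule ccontr)
      assume "\<not> (i + 2 \<le> j \<or> j + 2 \<le> i)"
      then have "j = Suc i \<or> i = Suc j" using ij(3) by auto
      then show False
      proof
        assume "j = Suc i"
        then have "contains123 \<pi>" using ij unfolding contains123_def asc_set_def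
          by (intro exI[of _ i] exI[of _ "Suc i"] exI[of _ "Suc (Suc i)"]) auto
        then show False using nc by simp
      next
        assume "i = Suc j"
        then have "contains123 \<pi>" using ij unfolding contains123_def asc_set_def
          by (intro exI[of _ j] exI[of _ "Suc j"] exI[of _ "Suc (Suc j)"]) auto
        then show False using nc by simp
      qed
    qed
  qed
  have "Max {card I | I. I \<subseteq> asc_set \<pi> \<and> nonadj I} = card (asc_set \<pi>)"
  proof (rule Max_eqI)
    show "finite {card I | I. I \<subseteq> asc_set \<pi> \<and> nonadj I}" by (rule mn_fin[OF asc_set_finite])
  next
    fix y assume "y \<in> {card I | I. I \<subseteq> asc_set \<pi> \<and> nonadj I}"
    then show "y \<le> card (asc_set \<pi>)" using card_mono[OF asc_set_finite] by auto
  next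
    show "card (asc_set \<pi>) \<in> {card I | I. I \<subseteq> asc_set \<pi> \<and> nonadj I}" using na by auto
  qed
  then show ?thesis unfolding MNA_def asc_def .
qed



definition Fs :: "(nat list \<Rightarrow> nat) \<Rightarrow> real \<Rightarrow> nat \<Rightarrow> real" where
  "Fs st t n = (\<Sum>\<pi>\<in>av123_132 n. t ^ st \<pi>)"

lemma relab_id: "v \<le> m \<Longrightarrow> relab (Suc m) v = v" by (simp add: relab_def)
lemma relab_self: "relab m m = Suc m" by (simp add: relab_def)

lemma map_relab_id: "\<sigma> \<in> av123_132 m \<Longrightarrow> map (relab (Suc m)) \<sigma> = \<sigma>"
  using av_le relab_id by (simp add: map_idI)

lemma relab_mono_set: "set xs \<subseteq> {..k} \<Longrightarrow> strict_mono_on (set xs) (relab k)"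
  using monotone_on_subset[OF relab_mono] by blast

lemma av_set_le: "\<sigma> \<in> av123_132 m \<Longrightarrow> set \<sigma> \<subseteq> {..m}"
  using av_le by blast

lemma av_Cons: "\<sigma> \<in> av123_132 m \<Longrightarrow> 1 \<le> m \<Longrightarrow> \<exists>b \<sigma>'. \<sigma> = b # \<sigma>' \<and> b \<le> m"
proof -
  assume a: "\<sigma> \<in> av123_132 m" "1 \<le> m"
  then have "set \<sigma> = {1..m}" using av_perms by blast
  then obtain b \<sigma>' where "\<sigma> = b # \<sigma>'" using a(2) by (cases \<sigma>) auto
  then show ?thesis using av_le[OF a(1), of b] by auto
qed

lemma map_relab_set: "\<sigma> \<in> av123_132 m \<Longrightarrow> set (map (relab m) \<sigma>) \<subseteq> {..Suc m}"
  using av_le by (fastforce simp: relab_def)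

lemma relab_Suc_second:
  assumes "\<sigma> \<in> av123_132 m"
  shows "map (relab (Suc m)) (m # map (relab m) \<sigma>) = m # map (relab (Suc m)) (map (relab m) \<sigma>)"
  by (simp add: relab_def)

lemma mono_second:
  assumes "\<sigma> \<in> av123_132 m"
  shows "strict_mono_on (set (m # map (relab m) \<sigma>)) (relab (Suc m))"
  using map_relab_set[OF assms] by (intro relab_mono_set) auto

lemma mono_first:
  assumes "\<sigma> \<in> av123_132 m"
  shows "strict_mono_on (set \<sigma>) (relab m)"
  using av_set_le[OF assms] by (rule relab_mono_set)

lemma F0: "Fs st t 0 = t ^ st []" unfolding Fs_def av0 by simp
lemma F1: "Fs st t 1 = t ^ st [1]" unfolding Fs_def using av1 by simp

lemma sum_pow_Suc: "(\<Sum>x\<in>A. (t::real) ^ Suc (f x)) = t * (\<Sum>x\<in>A. t ^ f x)"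
  by (simp add: sum_distrib_left)

section \<open>asc\<close>

definition Qa :: "real \<Rightarrow> nat \<Rightarrow> real" where
  "Qa t m = (\<Sum>\<sigma>\<in>av123_132 m. t ^ asc (m # map (relab m) \<sigma>))"

lemma asc_F_Suc:
  assumes m: "1 \<le> m"
  shows "Fs asc t (Suc m) = Fs asc t m + Qa t m"
proof -
  have "(\<Sum>\<sigma>\<in>av123_132 m. t ^ asc (Suc m # \<sigma>)) = (\<Sum>\<sigma>\<in>av123_132 m. t ^ asc \<sigma>)"
  proof (rule sum.cong[OF refl])
    fix \<sigma> assume s: "\<sigma> \<in> av123_132 m"
    obtain b \<sigma>' where "\<sigma> = b # \<sigma>'" "b \<le> m" using av_Cons[OF s m] by blast
    then show "t ^ asc (Suc m # \<sigma>) = t ^ asc \<sigma>" by (simp add: asc_Cons2)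
  qed
  then show ?thesis unfolding Fs_def Qa_def using sum_av_Suc[OF m, of "\<lambda>\<pi>. t ^ asc \<pi>"] by simp
qed

lemma asc_Q_Suc:
  assumes m: "1 \<le> m"
  shows "Qa t (Suc m) = t * Fs asc t m + Qa t m"
proof -
  have "Qa t (Suc m) = (\<Sum>\<sigma>\<in>av123_132 m. t ^ asc (Suc m # map (relab (Suc m)) (Suc m # \<sigma>)))
      + (\<Sum>\<sigma>\<in>av123_132 m. t ^ asc (Suc m # map (relab (Suc m)) (m # map (relab m) \<sigma>)))"
    unfolding Qa_def by (rule sum_av_Suc[OF m])
  also have "(\<Sum>\<sigma>\<in>av123_132 m. t ^ asc (Suc m # map (relab (Suc m)) (Suc m # \<sigma>)))
     = (\<Sum>\<sigma>\<in>av123_132 m. t ^ Suc (asc \<sigma>))"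
  proof (rule sum.cong[OF refl])
    fix \<sigma> assume s: "\<sigma> \<in> av123_132 m"
    obtain b \<sigma>' where "\<sigma> = b # \<sigma>'" "b \<le> m" using av_Cons[OF s m] by blast
    then show "t ^ asc (Suc m # map (relab (Suc m)) (Suc m # \<sigma>)) = t ^ Suc (asc \<sigma>)"
      using map_relab_id[OF s] by (simp add: relab_self asc_Cons2)
  qed
  also have "(\<Sum>\<sigma>\<in>av123_132 m. t ^ asc (Suc m # map (relab (Suc m)) (m # map (relab m) \<sigma>)))
     = (\<Sum>\<sigma>\<in>av123_132 m. t ^ asc (m # map (relab m) \<sigma>))"
  proof (rule sum.cong[OF refl])
    fix \<sigma> assume s: "\<sigma> \<in> av123_132 m"
    have "asc (Suc m # map (relab (Suc m)) (m # map (relab m) \<sigma>)) = asc (map (relab (Suc m)) (m # map (relab m) \<sigma>))"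
      by (simp add: asc_Cons2 relab_def)
    also have "\<dots> = asc (m # map (relab m) \<sigma>)" by (rule asc_map[OF mono_second[OF s]])
    finally show "t ^ asc (Suc m # map (relab (Suc m)) (m # map (relab m) \<sigma>)) = t ^ asc (m # map (relab m) \<sigma>)"
      by simp
  qed
  finally show ?thesis unfolding Fs_def Qa_def by (simp add: sum_distrib_left)
qed

lemma asc_rec: "Fs asc t (Suc (Suc n)) = 2 * Fs asc t (Suc n) + (t - 1) * Fs asc t n"
proof (cases n)
  case 0
  have "Qa t 1 = t" unfolding Qa_def using av1 by (simp add: relab_def asc_Cons2 asc_short)
  then show ?thesis using asc_F_Suc[of 1 t] 0 F0 F1 by (simp add: asc_short)
next
  case (Suc k)
  have "Fs asc t (Suc (Suc n)) = Fs asc t (Suc n) + Qa t (Suc n)" by (rule asc_F_Suc) simp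
  also have "Qa t (Suc n) = t * Fs asc t n + Qa t n" using Suc by (intro asc_Q_Suc) simp
  also have "Qa t n = Fs asc t (Suc n) - Fs asc t n" using asc_F_Suc[of n t] Suc by simp
  finally show ?thesis by (simp add: algebra_simps)
qed

section \<open>des\<close>

definition Qd :: "real \<Rightarrow> nat \<Rightarrow> real" where
  "Qd t m = (\<Sum>\<sigma>\<in>av123_132 m. t ^ des (m # map (relab m) \<sigma>))"

lemma des_F_Suc:
  assumes m: "1 \<le> m"
  shows "Fs des t (Suc m) = t * Fs des t m + Qd t m"
proof -
  have "(\<Sum>\<sigma>\<in>av123_132 m. t ^ des (Suc m # \<sigma>)) = (\<Sum>\<sigma>\<in>av123_132 m. t ^ Suc (des \<sigma>))"
  proof (rule sum.cong[OF refl])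
    fix \<sigma> assume s: "\<sigma> \<in> av123_132 m"
    obtain b \<sigma>' where "\<sigma> = b # \<sigma>'" "b \<le> m" using av_Cons[OF s m] by blast
    then show "t ^ des (Suc m # \<sigma>) = t ^ Suc (des \<sigma>)" by (simp add: des_Cons2)
  qed
  then show ?thesis unfolding Fs_def Qd_def using sum_av_Suc[OF m, of "\<lambda>\<pi>. t ^ des \<pi>"] by (simp add: sum_distrib_left)
qed

lemma des_Q_Suc:
  assumes m: "1 \<le> m"
  shows "Qd t (Suc m) = t * Fs des t m + t * Qd t m"
proof -
  have "Qd t (Suc m) = (\<Sum>\<sigma>\<in>av123_132 m. t ^ des (Suc m # map (relab (Suc m)) (Suc m # \<sigma>)))
      + (\<Sum>\<sigma>\<in>av123_132 m. t ^ des (Suc m # map (relab (Suc m)) (m # map (relab m) \<sigma>)))"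
    unfolding Qd_def by (rule sum_av_Suc[OF m])
  also have "(\<Sum>\<sigma>\<in>av123_132 m. t ^ des (Suc m # map (relab (Suc m)) (Suc m # \<sigma>)))
     = (\<Sum>\<sigma>\<in>av123_132 m. t ^ Suc (des \<sigma>))"
  proof (rule sum.cong[OF refl])
    fix \<sigma> assume s: "\<sigma> \<in> av123_132 m"
    obtain b \<sigma>' where "\<sigma> = b # \<sigma>'" "b \<le> m" using av_Cons[OF s m] by blast
    then show "t ^ des (Suc m # map (relab (Suc m)) (Suc m # \<sigma>)) = t ^ Suc (des \<sigma>)"
      using map_relab_id[OF s] by (simp add: relab_self des_Cons2)
  qed
  also have "(\<Sum>\<sigma>\<in>av123_132 m. t ^ des (Suc m # map (relab (Suc m)) (m # map (relab m) \<sigma>)))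
     = (\<Sum>\<sigma>\<in>av123_132 m. t ^ Suc (des (m # map (relab m) \<sigma>)))"
  proof (rule sum.cong[OF refl])
    fix \<sigma> assume s: "\<sigma> \<in> av123_132 m"
    have "des (Suc m # map (relab (Suc m)) (m # map (relab m) \<sigma>)) = Suc (des (map (relab (Suc m)) (m # map (relab m) \<sigma>)))"
      by (simp add: des_Cons2 relab_def)
    also have "des (map (relab (Suc m)) (m # map (relab m) \<sigma>)) = des (m # map (relab m) \<sigma>)"
      by (rule des_map[OF mono_second[OF s]])
    finally show "t ^ des (Suc m # map (relab (Suc m)) (m # map (relab m) \<sigma>)) = t ^ Suc (des (m # map (relab m) \<sigma>))"
      by simp
  qed
  finally show ?thesis unfolding Fs_def Qd_def by (simp add: sum_distrib_left)
qed

lemma des_rec0: "Fs des t 2 = 1 + t"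
proof -
  have "Qd t 1 = 1" unfolding Qd_def using av1 by (simp add: relab_def des_Cons2 des_short)
  then show ?thesis using des_F_Suc[of 1 t] F1 by (simp add: des_short numeral_2_eq_2)
qed

lemma des_rec: "Fs des t (Suc (Suc (Suc n))) = 2 * t * Fs des t (Suc (Suc n)) + (t - t^2) * Fs des t (Suc n)"
proof -
  have "Fs des t (Suc (Suc (Suc n))) = t * Fs des t (Suc (Suc n)) + Qd t (Suc (Suc n))" by (rule des_F_Suc) simp
  also have "Qd t (Suc (Suc n)) = t * Fs des t (Suc n) + t * Qd t (Suc n)" by (rule des_Q_Suc) simp
  also have "Qd t (Suc n) = Fs des t (Suc (Suc n)) - t * Fs des t (Suc n)" using des_F_Suc[of "Suc n" t] by simp
  finally show ?thesis by (simp add: algebra_simps power2_eq_square)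
qed

section \<open>MND\<close>

definition Pz :: "real \<Rightarrow> nat \<Rightarrow> real" where
  "Pz t m = (\<Sum>\<sigma>\<in>av123_132 m. t ^ MND (Suc m # \<sigma>))"
definition Qz :: "real \<Rightarrow> nat \<Rightarrow> real" where
  "Qz t m = (\<Sum>\<sigma>\<in>av123_132 m. t ^ MND (m # map (relab m) \<sigma>))"

lemma MND_F_Suc:
  assumes m: "1 \<le> m"
  shows "Fs MND t (Suc m) = Pz t m + Qz t m"
  unfolding Fs_def Pz_def Qz_def by (rule sum_av_Suc[OF m])

lemma MND_P_Suc:
  assumes m: "1 \<le> m"
  shows "Pz t (Suc m) = 2 * t * Fs MND t m"
proof -
  have "Pz t (Suc m) = (\<Sum>\<sigma>\<in>av123_132 m. t ^ MND (Suc (Suc m) # Suc m # \<sigma>))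
      + (\<Sum>\<sigma>\<in>av123_132 m. t ^ MND (Suc (Suc m) # m # map (relab m) \<sigma>))"
    unfolding Pz_def by (rule sum_av_Suc[OF m])
  also have "(\<Sum>\<sigma>\<in>av123_132 m. t ^ MND (Suc (Suc m) # Suc m # \<sigma>)) = (\<Sum>\<sigma>\<in>av123_132 m. t ^ Suc (MND \<sigma>))"
    by (simp add: MND_Cons2)
  also have "(\<Sum>\<sigma>\<in>av123_132 m. t ^ MND (Suc (Suc m) # m # map (relab m) \<sigma>)) = (\<Sum>\<sigma>\<in>av123_132 m. t ^ Suc (MND \<sigma>))"
  proof (rule sum.cong[OF refl])
    fix \<sigma> assume s: "\<sigma> \<in> av123_132 m"
    show "t ^ MND (Suc (Suc m) # m # map (relab m) \<sigma>) = t ^ Suc (MND \<sigma>)"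
      using MND_map[OF mono_first[OF s]] by (simp add: MND_Cons2)
  qed
  finally show ?thesis unfolding Fs_def by (simp add: sum_distrib_left mult.assoc)
qed

lemma MND_Q_Suc:
  assumes m: "1 \<le> m"
  shows "Qz t (Suc m) = Pz t m + t * Fs MND t m"
proof -
  have "Qz t (Suc m) = (\<Sum>\<sigma>\<in>av123_132 m. t ^ MND (Suc m # map (relab (Suc m)) (Suc m # \<sigma>)))
      + (\<Sum>\<sigma>\<in>av123_132 m. t ^ MND (Suc m # map (relab (Suc m)) (m # map (relab m) \<sigma>)))"
    unfolding Qz_def by (rule sum_av_Suc[OF m])
  also have "(\<Sum>\<sigma>\<in>av123_132 m. t ^ MND (Suc m # map (relab (Suc m)) (Suc m # \<sigma>)))
     = (\<Sum>\<sigma>\<in>av123_132 m. t ^ MND (Suc m # \<sigma>))"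
  proof (rule sum.cong[OF refl])
    fix \<sigma> assume s: "\<sigma> \<in> av123_132 m"
    have e: "map (relab (Suc m)) (Suc m # \<sigma>) = Suc (Suc m) # \<sigma>"
      using map_relab_id[OF s] by (simp add: relab_self)
    have mo: "strict_mono_on (set (Suc m # \<sigma>)) (relab (Suc m))"
      using av_set_le[OF s] by (intro relab_mono_set) auto
    have "MND (Suc m # Suc (Suc m) # \<sigma>) = MND (Suc (Suc m) # \<sigma>)" by (simp add: MND_Cons2)
    also have "\<dots> = MND (Suc m # \<sigma>)" using MND_map[OF mo] e by simp
    finally show "t ^ MND (Suc m # map (relab (Suc m)) (Suc m # \<sigma>)) = t ^ MND (Suc m # \<sigma>)"
      using e by simp
  qed
  also have "(\<Sum>\<sigma>\<in>av123_132 m. t ^ MND (Suc m # map (relab (Suc m)) (m # map (relab m) \<sigma>)))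
     = (\<Sum>\<sigma>\<in>av123_132 m. t ^ Suc (MND \<sigma>))"
  proof (rule sum.cong[OF refl])
    fix \<sigma> assume s: "\<sigma> \<in> av123_132 m"
    have "MND (Suc m # map (relab (Suc m)) (m # map (relab m) \<sigma>))
        = Suc (MND (map (relab (Suc m)) (map (relab m) \<sigma>)))"
      by (simp add: MND_Cons2 relab_def)
    also have "MND (map (relab (Suc m)) (map (relab m) \<sigma>)) = MND (map (relab m) \<sigma>)"
      by (rule MND_map) (use map_relab_set[OF s] in \<open>intro relab_mono_set; auto\<close>)
    also have "MND (map (relab m) \<sigma>) = MND \<sigma>" by (rule MND_map[OF mono_first[OF s]])
    finally show "t ^ MND (Suc m # map (relab (Suc m)) (m # map (relab m) \<sigma>)) = t ^ Suc (MND \<sigma>)"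
      by simp
  qed
  finally show ?thesis unfolding Fs_def Pz_def by (simp add: sum_distrib_left)
qed

lemma MND_P1: "Pz t 1 = t"
  unfolding Pz_def using av1 by (simp add: MND_Cons2 MND_short)

lemma MND_Q1: "Qz t 1 = 1"
  unfolding Qz_def using av1 by (simp add: MND_Cons2 MND_short relab_def)

lemma MND_F2: "Fs MND t 2 = 1 + t"
  using MND_F_Suc[of 1 t] MND_P1 MND_Q1 by (simp add: numeral_2_eq_2)

lemma MND_F3: "Fs MND t 3 = 4 * t"
proof -
  have "Fs MND t 3 = Pz t 2 + Qz t 2" using MND_F_Suc[of 2 t] by (simp add: numeral_3_eq_3 numeral_2_eq_2)
  also have "Pz t 2 = 2 * t" using MND_P_Suc[of 1 t] F1[of MND t] by (simp add: numeral_2_eq_2 MND_short)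
  also have "Qz t 2 = 2 * t" using MND_Q_Suc[of 1 t] F1[of MND t] MND_P1 by (simp add: numeral_2_eq_2 MND_short)
  finally show ?thesis by simp
qed

lemma MND_rec: "Fs MND t (n + 4) = 3 * t * Fs MND t (n + 2) + 2 * t * Fs MND t (n + 1)"
proof -
  have "Fs MND t (n + 4) = Pz t (n + 3) + Qz t (n + 3)"
    using MND_F_Suc[of "n + 3" t] by (simp add: numeral_eq_Suc)
  also have "Pz t (n + 3) = 2 * t * Fs MND t (n + 2)"
    using MND_P_Suc[of "n + 2" t] by (simp add: numeral_eq_Suc)
  also have "Qz t (n + 3) = Pz t (n + 2) + t * Fs MND t (n + 2)"
    using MND_Q_Suc[of "n + 2" t] by (simp add: numeral_eq_Suc)
  also have "Pz t (n + 2) = 2 * t * Fs MND t (n + 1)"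
    using MND_P_Suc[of "n + 1" t] by (simp add: numeral_eq_Suc)
  finally show ?thesis by (simp add: algebra_simps)
qed

unbundle fps_syntax



definition cub :: "real \<Rightarrow> real \<Rightarrow> real \<Rightarrow> real \<Rightarrow> real fps" where
  "cub a b c d = fps_const a + fps_const b * fps_X + fps_const c * fps_X^2 + fps_const d * fps_X^3"

lemma cub_mult_nth:
  "(G * cub a b c d) $ n = a * G $ n + (if n < 1 then 0 else b * G $ (n-1))
     + (if n < 2 then 0 else c * G $ (n-2)) + (if n < 3 then 0 else d * G $ (n-3))"
proof -
  have "G * cub a b c d = fps_const a * G + fps_const b * (G * fps_X) + fps_const c * (G * fps_X^2)
      + fps_const d * (G * fps_X^3)" unfolding cub_def by (simp add: algebra_simps)
  then show ?thesis by (simp add: fps_X_power_mult_right_nth)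
qed

lemma cub_nth:
  "cub a b c d $ n = (if n = 0 then a else if n = 1 then b else if n = 2 then c else if n = 3 then d else 0)"
  unfolding cub_def by simp

lemma gf_solve:
  fixes G :: "real fps"
  assumes rec: "\<And>n. a0 * G $ n + (if n < 1 then 0 else a1 * G $ (n-1))
     + (if n < 2 then 0 else a2 * G $ (n-2)) + (if n < 3 then 0 else a3 * G $ (n-3))
     = (if n = 0 then c0 else if n = 1 then c1 else if n = 2 then c2 else if n = 3 then c3 else 0)"
  and a0: "a0 \<noteq> 0"
  and D: "D = cub a0 a1 a2 a3" and N: "N = cub c0 c1 c2 c3"
  shows "G = N / D"
proof -
  have GD: "G * D = N"
    by (rule fps_ext) (simp only: D N cub_mult_nth cub_nth rec)
  have "D \<noteq> 0"
  proof
    assume "D = 0" then have "D $ 0 = 0" by simp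
    then show False using a0 D cub_nth[of a0 a1 a2 a3 0] by simp
  qed
  then show ?thesis using GD by (metis nonzero_mult_div_cancel_right)
qed

lemma gf_nth: "gf st t $ n = Fs st t n"
  unfolding gf_def Fs_def by simp

lemma D_asc: "1 - 2 * fps_X + fps_X^2 - fps_const p * fps_X^2 = cub 1 (-2) (1 - p) 0"
  by (rule fps_ext) (simp add: cub_nth fps_numeral_fps_const)





lemma F0_st: "st [] = 0 \<Longrightarrow> Fs st t 0 = 1" unfolding F0 by simp
lemma F1_st: "st [1] = 0 \<Longrightarrow> Fs st t 1 = 1" unfolding F1 by simp

lemma asc_coeff:
  fixes p :: real
  shows "1 * gf asc p $ n + (if n < 1 then 0 else (-2) * gf asc p $ (n-1))
   + (if n < 2 then 0 else (1-p) * gf asc p $ (n-2)) + (if n < 3 then 0 else 0 * gf asc p $ (n-3))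
   = (if n = 0 then 1 else if n = 1 then -1 else if n = 2 then 0 else if n = 3 then 0 else 0)"
  unfolding gf_nth
proof -
  have f0: "Fs asc p 0 = 1" by (rule F0_st) (simp add: asc_short)
  have f1: "Fs asc p 1 = 1" by (rule F1_st) (simp add: asc_short)
  show "1 * Fs asc p n + (if n < 1 then 0 else (-2) * Fs asc p (n-1))
   + (if n < 2 then 0 else (1-p) * Fs asc p (n-2)) + (if n < 3 then 0 else 0 * Fs asc p (n-3))
   = (if n = 0 then 1 else if n = 1 then -1 else if n = 2 then 0 else if n = 3 then 0 else 0)"
  proof (cases n)
    case 0 then show ?thesis using f0 by simp
  next
    case (Suc k)
    show ?thesis
    proof (cases k)
      case 0 then show ?thesis using Suc f0 f1 by simp
    next
      case (Suc j)
      then show ?thesis using \<open>n = Suc k\<close> asc_rec[of p j] by (simp add: algebra_simps)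
    qed
  qed
qed

lemma des_coeff:
  fixes q :: real
  shows "1 * gf des q $ n + (if n < 1 then 0 else (-2*q) * gf des q $ (n-1))
   + (if n < 2 then 0 else (q^2-q) * gf des q $ (n-2)) + (if n < 3 then 0 else 0 * gf des q $ (n-3))
   = (if n = 0 then 1 else if n = 1 then 1 - 2*q else if n = 2 then 1 - 2*q + q^2 else if n = 3 then 0 else 0)"
  unfolding gf_nth
proof -
  have f0: "Fs des q 0 = 1" by (rule F0_st) (simp add: des_short)
  have f1: "Fs des q 1 = 1" by (rule F1_st) (simp add: des_short)
  show "1 * Fs des q n + (if n < 1 then 0 else (-2*q) * Fs des q (n-1))
   + (if n < 2 then 0 else (q^2-q) * Fs des q (n-2)) + (if n < 3 then 0 else 0 * Fs des q (n-3))
   = (if n = 0 then 1 else if n = 1 then 1 - 2*q else if n = 2 then 1 - 2*q + q^2 else if n = 3 then 0 else 0)"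
  proof (cases n)
    case 0 then show ?thesis using f0 by simp
  next
    case (Suc k)
    show ?thesis
    proof (cases k)
      case 0 then show ?thesis using Suc f0 f1 by simp
    next
      case (Suc j)
      show ?thesis
      proof (cases j)
        case 0 then show ?thesis using \<open>n = Suc k\<close> Suc f0 f1 des_rec0[of q]
          by (simp add: numeral_2_eq_2 algebra_simps power2_eq_square)
      next
        case (Suc i)
        then show ?thesis using \<open>n = Suc k\<close> \<open>k = Suc j\<close> des_rec[of q i]
          by (simp add: algebra_simps power2_eq_square)
      qed
    qed
  qed
qed

lemma MND_coeff:
  fixes z :: real
  shows "1 * gf MND z $ n + (if n < 1 then 0 else 0 * gf MND z $ (n-1))
   + (if n < 2 then 0 else (-3*z) * gf MND z $ (n-2)) + (if n < 3 then 0 else (-2*z) * gf MND z $ (n-3))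
   = (if n = 0 then 1 else if n = 1 then 1 else if n = 2 then 1 - 2*z else if n = 3 then -z else 0)"
  unfolding gf_nth
proof -
  have f0: "Fs MND z 0 = 1" by (rule F0_st) (simp add: MND_short)
  have f1: "Fs MND z 1 = 1" by (rule F1_st) (simp add: MND_short)
  consider "n = 0" | "n = 1" | "n = 2" | "n = 3" | j where "n = j + 4"
  proof -
    have "n = 0 \<or> n = 1 \<or> n = 2 \<or> n = 3 \<or> n = (n - 4) + 4" by arith
    then show ?thesis using that by blast
  qed
  then show "1 * Fs MND z n + (if n < 1 then 0 else 0 * Fs MND z (n-1))
   + (if n < 2 then 0 else (-3*z) * Fs MND z (n-2)) + (if n < 3 then 0 else (-2*z) * Fs MND z (n-3))
   = (if n = 0 then 1 else if n = 1 then 1 else if n = 2 then 1 - 2*z else if n = 3 then -z else 0)"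
  proof cases
    case 1 then show ?thesis using f0 by simp
  next
    case 2 then show ?thesis using f0 f1 by simp
  next
    case 3 then show ?thesis using f0 f1 MND_F2[of z] by simp
  next
    case 4 then show ?thesis using f0 f1 MND_F3[of z] by simp
  next
    case 5
    have "j + 4 - 2 = j + 2" "j + 4 - 3 = j + 1" by simp_all
    then show ?thesis using 5 MND_rec[of z j] by (simp add: algebra_simps)
  qed
qed

lemma gf_MNA_asc: "gf MNA y = gf asc y"
  unfolding gf_def using MNA_eq_asc by (intro arg_cong[where f = Abs_fps] ext sum.cong) auto

theorem corollary1:
  fixes p q y z :: real
  shows "gf asc p = (1 - fps_X) / (1 - 2 * fps_X + fps_X^2 - fps_const p * fps_X^2)
   \<and> gf des q = (1 + fps_X - 2 * fps_const q * fps_X + fps_X^2 - 2 * fps_const q * fps_X^2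
                   + fps_const q ^ 2 * fps_X^2)
                 / (1 - 2 * fps_const q * fps_X - fps_const q * fps_X^2 + fps_const q ^ 2 * fps_X^2)
   \<and> gf MNA y = (1 - fps_X) / (1 - 2 * fps_X + fps_X^2 - fps_X^2 * fps_const y)
   \<and> gf MND z = (1 + fps_X + fps_X^2 - 2 * fps_X^2 * fps_const z - fps_X^3 * fps_const z)
                 / (1 - 3 * fps_X^2 * fps_const z - 2 * fps_X^3 * fps_const z)"
proof (intro conjI)
  have N1: "1 - fps_X = cub 1 (-1) 0 0"
    by (rule fps_ext) (simp add: cub_nth fps_numeral_fps_const)
  show "gf asc p = (1 - fps_X) / (1 - 2 * fps_X + fps_X^2 - fps_const p * fps_X^2)"
    by (rule gf_solve[OF asc_coeff _ D_asc N1]) simp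
  have D2: "1 - 2 * fps_const q * fps_X - fps_const q * fps_X^2 + fps_const q ^ 2 * fps_X^2
      = cub 1 (-2*q) (q^2-q) 0"
    by (rule fps_ext) (simp add: cub_nth fps_numeral_fps_const)
  have N2: "1 + fps_X - 2 * fps_const q * fps_X + fps_X^2 - 2 * fps_const q * fps_X^2
                   + fps_const q ^ 2 * fps_X^2 = cub 1 (1 - 2*q) (1 - 2*q + q^2) 0"
    by (rule fps_ext) (simp add: cub_nth fps_numeral_fps_const)
  show "gf des q = (1 + fps_X - 2 * fps_const q * fps_X + fps_X^2 - 2 * fps_const q * fps_X^2
                   + fps_const q ^ 2 * fps_X^2)
                 / (1 - 2 * fps_const q * fps_X - fps_const q * fps_X^2 + fps_const q ^ 2 * fps_X^2)"
    by (rule gf_solve[OF des_coeff _ D2 N2]) simp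
  have D3: "1 - 2 * fps_X + fps_X^2 - fps_X^2 * fps_const y = cub 1 (-2) (1 - y) 0"
    by (rule fps_ext) (simp add: cub_nth fps_numeral_fps_const)
  show "gf MNA y = (1 - fps_X) / (1 - 2 * fps_X + fps_X^2 - fps_X^2 * fps_const y)"
    unfolding gf_MNA_asc by (rule gf_solve[OF asc_coeff _ D3 N1]) simp
  have D4: "1 - 3 * fps_X^2 * fps_const z - 2 * fps_X^3 * fps_const z = cub 1 0 (-3*z) (-2*z)"
    by (rule fps_ext) (simp add: cub_nth fps_numeral_fps_const)
  have N4: "1 + fps_X + fps_X^2 - 2 * fps_X^2 * fps_const z - fps_X^3 * fps_const z
      = cub 1 1 (1 - 2*z) (-z)"
    by (rule fps_ext) (simp add: cub_nth fps_numeral_fps_const)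
  show "gf MND z = (1 + fps_X + fps_X^2 - 2 * fps_X^2 * fps_const z - fps_X^3 * fps_const z)
                 / (1 - 3 * fps_X^2 * fps_const z - 2 * fps_X^3 * fps_const z)"
    by (rule gf_solve[OF MND_coeff _ D4 N4]) simp
qed


end
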